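(* Consider a cake-division instance $\langle [n],\{v_a\}_{a\in[n]}\rangle$, let $\alpha\ge1$, let $\widetilde{\mathcal{I}}$ be an $\alpha$-approximately envy-free allocation and let $\mathcal{I}^*$ be a Nash optimal allocation. Then (i) $\mathrm{NSW}(\widetilde{\mathcal{I}})\ge\frac{1}{2\alpha}\mathrm{NSW}(\mathcal{I}^* )$; and (ii) $\mathcal{I}^*$ is $4$-approximately envy-free.
   Context: The cake is $[0,1]$. Each agent's valuation $v_a$ assigns a value $v_a(I)\ge0$ to every interval $I\subseteq[0,1]$ and is normalized ($v_a([0,1])=1$), divisible (for every interval $[x,y]$ and $\lambda\in[0,1]$ there is $z\in[x,y]$ with $v_a([x,z])=\lambda v_a([x,y])$; in particular single points have value $0$), and sigma additive ($v_a(I\cup J)=v_a(I)+v_a(J)$ for disjoint intervals). Intervals meeting only at an endpoint are regarded as disjoint. An allocation is a tuple $\mathcal{I}=\{I_1,\dots,I_n\}$ of pairwise-disjoint (possibly empty) intervals with $\bigcup_aI_a=[0,1]$, $I_a$ going to agent $a$. For $\alpha\ge1$, $\mathcal{I}$ is $\alpha$-approximately envy-free if $v_a(I_a)\ge\frac1\alpha v_a(I_b)$ for all $a,b$. $\mathrm{NSW}(\mathcal{I})=\left(\prod_a v_a(I_a)\right)^{1/n}$, and a Nash optimal allocation is one maximizing $\mathrm{NSW}$ over all allocations. *)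

theory Defs
  imports "HOL-Analysis.Analysis"
begin

definition cake_interval :: "real set \<Rightarrow> bool" where
  "cake_interval I \<longleftrightarrow> is_interval I \<and> I \<subseteq> {0..1}"

text \<open>Intervals meeting only at an endpoint are regarded as disjoint.\<close>
definition int_disjoint :: "real set \<Rightarrow> real set \<Rightarrow> bool" where
  "int_disjoint I J \<longleftrightarrow> (\<exists>x. I \<inter> J \<subseteq> {x})"

definition valuation :: "(real set \<Rightarrow> real) \<Rightarrow> bool" where
  "valuation v \<longleftrightarrow>
     (\<forall>I. cake_interval I \<longrightarrow> v I \<ge> 0) \<and>
     v {0..1} = 1 \<and>
     (\<forall>x y l. 0 \<le> x \<and> x \<le> y \<and> y \<le> 1 \<and> 0 \<le> l \<and> l \<le> 1 \<longrightarrow>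
        (\<exists>z\<in>{x..y}. v {x..z} = l * v {x..y})) \<and>
     (\<forall>I J. cake_interval I \<and> cake_interval J \<and> cake_interval (I \<union> J) \<and> int_disjoint I J
        \<longrightarrow> v (I \<union> J) = v I + v J)"

definition allocation :: "nat \<Rightarrow> (nat \<Rightarrow> real set) \<Rightarrow> bool" where
  "allocation n A \<longleftrightarrow>
     (\<forall>a<n. cake_interval (A a)) \<and>
     (\<forall>a<n. \<forall>b<n. a \<noteq> b \<longrightarrow> int_disjoint (A a) (A b)) \<and>
     (\<Union>a<n. A a) = {0..1}"

definition approx_EF :: "nat \<Rightarrow> (nat \<Rightarrow> real set \<Rightarrow> real) \<Rightarrow> real \<Rightarrow> (nat \<Rightarrow> real set) \<Rightarrow> bool" where
  "approx_EF n v \<alpha> A \<longleftrightarrow> (\<forall>a<n. \<forall>b<n. v a (A a) \<ge> (1 / \<alpha>) * v a (A b))"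

definition NSW :: "nat \<Rightarrow> (nat \<Rightarrow> real set \<Rightarrow> real) \<Rightarrow> (nat \<Rightarrow> real set) \<Rightarrow> real" where
  "NSW n v A = root n (\<Prod>a<n. v a (A a))"

definition nash_optimal :: "nat \<Rightarrow> (nat \<Rightarrow> real set \<Rightarrow> real) \<Rightarrow> (nat \<Rightarrow> real set) \<Rightarrow> bool" where
  "nash_optimal n v A \<longleftrightarrow> allocation n A \<and> (\<forall>B. allocation n B \<longrightarrow> NSW n v B \<le> NSW n v A)"

end

theory Submission
  imports Defs
begin


lemma int_disjoint_iff: "int_disjoint S T \<longleftrightarrow> (\<forall>x\<in>S\<inter>T. \<forall>y\<in>S\<inter>T. x = y)"
  unfolding int_disjoint_def by blast

lemma int_disjoint_commute: "int_disjoint S T \<Longrightarrow> int_disjoint T S"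
  unfolding int_disjoint_def by (metis Int_commute)

lemma int_disjoint_mono: "int_disjoint S T \<Longrightarrow> S' \<subseteq> S \<Longrightarrow> T' \<subseteq> T \<Longrightarrow> int_disjoint S' T'"
  unfolding int_disjoint_def by blast

lemma cake_cc: "0 \<le> x \<Longrightarrow> y \<le> 1 \<Longrightarrow> cake_interval {x..y}"
  unfolding cake_interval_def by (auto simp: is_interval_1)

lemma v_empty: assumes "valuation v" shows "v {} = 0"
proof -
  have c0: "cake_interval {0}" using cake_cc[of 0 0] by simp
  have ce: "cake_interval {}" unfolding cake_interval_def by simp
  have d: "int_disjoint {} {0}" unfolding int_disjoint_def by simp
  have "v ({} \<union> {0}) = v {} + v {0}"
    using assms c0 ce d unfolding valuation_def by (metis sup_bot.left_neutral)
  then show ?thesis by simp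
qed

lemma v_point: assumes "valuation v" "0 \<le> x" "x \<le> 1" shows "v {x} = 0"
proof -
  from assms obtain z where "z \<in> {x..x}" "v {x..z} = 0 * v {x..x}"
    unfolding valuation_def by (metis order_refl order.refl zero_le_one)
  then show ?thesis by simp
qed

lemma v_split: assumes "valuation v" "0 \<le> x" "x \<le> y" "y \<le> z" "z \<le> 1"
  shows "v {x..z} = v {x..y} + v {y..z}"
proof -
  have u: "{x..y} \<union> {y..z} = {x..z}" using assms by auto
  have d: "int_disjoint {x..y} {y..z}" unfolding int_disjoint_def by (rule exI[of _ y]) auto
  show ?thesis using assms(1) cake_cc[of x y] cake_cc[of y z] cake_cc[of x z] u d assms
    unfolding valuation_def by (metis order_trans)
qed

lemma v_nonneg: "valuation v \<Longrightarrow> cake_interval I \<Longrightarrow> v I \<ge> 0"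
  unfolding valuation_def by blast

lemma v_cc_mono: assumes "valuation v" "0 \<le> x'" "x' \<le> x" "x \<le> y" "y \<le> y'" "y' \<le> 1"
  shows "v {x..y} \<le> v {x'..y'}"
proof -
  have "v {x'..y'} = v {x'..x} + v {x..y'}" by (rule v_split) (use assms in auto)
  moreover have "v {x..y'} = v {x..y} + v {y..y'}" by (rule v_split) (use assms in auto)
  moreover have "v {x'..x} \<ge> 0" "v {y..y'} \<ge> 0"
    using v_nonneg[OF assms(1)] cake_cc assms by auto
  ultimately show ?thesis by linarith
qed

lemma v_insert: assumes "valuation v" "cake_interval I" "cake_interval (insert x I)"
  shows "v (insert x I) = v I"
proof (cases "x \<in> I")
  case True then show ?thesis by (simp add: insert_absorb)
next
  case False
  have x01: "0 \<le> x" "x \<le> 1" using assms(3) unfolding cake_interval_def by auto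
  have c: "cake_interval {x}" using cake_cc[OF x01] by simp
  have "v (I \<union> {x}) = v I + v {x}"
    using assms c unfolding valuation_def int_disjoint_def by (metis Un_insert_right sup_bot.right_neutral inf_le2)
  then show ?thesis using v_point[OF assms(1) x01] by simp
qed

lemma interval_between: "{p<..<q} \<subseteq> T \<Longrightarrow> T \<subseteq> {p..q} \<Longrightarrow> is_interval (T::real set)"
  unfolding is_interval_1
  by (metis atLeastAtMost_iff greaterThanLessThan_iff order.order_iff_strict order_le_less_trans order_less_le_trans subsetD)

definition nondeg :: "real set \<Rightarrow> bool" where
  "nondeg I \<longleftrightarrow> (\<exists>x y. x \<in> I \<and> y \<in> I \<and> x < y)"

lemma hull_facts:
  assumes "cake_interval I" "nondeg I"
  shows "Inf I < Sup I" "{Inf I<..<Sup I} \<subseteq> I" "I \<subseteq> {Inf I..Sup I}" "0 \<le> Inf I" "Sup I \<le> 1"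
proof -
  obtain x y where xy: "x \<in> I" "y \<in> I" "x < y" using assms(2) unfolding nondeg_def by blast
  have sub: "I \<subseteq> {0..1}" and iv: "is_interval I" using assms(1) unfolding cake_interval_def by auto
  have bb: "bdd_below I" "bdd_above I" using sub bdd_below_Icc bdd_above_Icc by (meson bdd_below_mono, meson bdd_above_mono)
  have ne: "I \<noteq> {}" using xy by auto
  show "I \<subseteq> {Inf I..Sup I}" using bb by (auto intro: cInf_lower cSup_upper)
  show "Inf I < Sup I" using bb xy cInf_lower[of x I] cSup_upper[of y I] by linarith
  show "0 \<le> Inf I" using ne sub by (intro cInf_greatest) auto
  show "Sup I \<le> 1" using ne sub by (intro cSup_least) auto
  show "{Inf I<..<Sup I} \<subseteq> I"
  proof
    fix t assume t: "t \<in> {Inf I<..<Sup I}"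
    then obtain a where a: "a \<in> I" "a < t" using ne by (meson cInf_less_iff greaterThanLessThan_iff bb)
    obtain b where b: "b \<in> I" "t < b" using t ne by (meson less_cSup_iff greaterThanLessThan_iff bb)
    show "t \<in> I" using iv a b unfolding is_interval_1 by (meson less_imp_le)
  qed
qed



lemma v_hull: assumes "valuation v" "cake_interval I" "nondeg I"
  shows "v I = v {Inf I..Sup I}"
proof -
  note h = hull_facts[OF assms(2,3)]
  let ?p = "Inf I" and ?q = "Sup I"
  have c1: "cake_interval (insert ?p I)" unfolding cake_interval_def
    using h by (intro conjI interval_between[of ?p ?q]) auto
  have c2: "insert ?q (insert ?p I) = {?p..?q}"
  proof
    show "insert ?q (insert ?p I) \<subseteq> {?p..?q}" using h by auto
    show "{?p..?q} \<subseteq> insert ?q (insert ?p I)"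
    proof
      fix x assume x: "x \<in> {?p..?q}"
      show "x \<in> insert ?q (insert ?p I)"
      proof (cases "x = ?p \<or> x = ?q")
        case False then have "x \<in> {?p<..<?q}" using x by auto
        then show ?thesis using h(2) by auto
      qed auto
    qed
  qed
  have c3: "cake_interval (insert ?q (insert ?p I))" unfolding c2 by (rule cake_cc) (use h in auto)
  have "v (insert ?q (insert ?p I)) = v (insert ?p I)"
    using v_insert[OF assms(1) c1 c3] .
  also have "\<dots> = v I" using v_insert[OF assms(1) assms(2) c1] .
  finally show ?thesis using c2 by simp
qed

lemma v_degen: assumes "valuation v" "cake_interval I" "\<not> nondeg I" shows "v I = 0"
proof -
  have "I = {} \<or> (\<exists>x. I = {x})" using assms(3) unfolding nondeg_def
    by (metis insertI1 linorder_neqE_linordered_idom subsetI subset_singletonD)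
  then show ?thesis
  proof
    assume "I = {}" then show ?thesis using v_empty[OF assms(1)] by simp
  next
    assume "\<exists>x. I = {x}"
    then obtain x where "I = {x}" by blast
    then show ?thesis using assms(2) v_point[OF assms(1)] unfolding cake_interval_def by auto
  qed
qed

lemma v_mono: assumes "valuation v" "cake_interval J" "cake_interval K" "J \<subseteq> K"
  shows "v J \<le> v K"
proof (cases "nondeg J")
  case False then show ?thesis using v_degen[OF assms(1,2)] v_nonneg[OF assms(1,3)] by simp
next
  case True
  have nK: "nondeg K" using True assms(4) unfolding nondeg_def by blast
  note hJ = hull_facts[OF assms(2) True] and hK = hull_facts[OF assms(3) nK]
  have subK: "K \<subseteq> {0..1}" using assms(3) unfolding cake_interval_def by auto
  have bb: "bdd_below K" "bdd_above K" using subK bdd_below_Icc bdd_above_Icc by (meson bdd_below_mono, meson bdd_above_mono)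
  have ne: "J \<noteq> {}" using True unfolding nondeg_def by auto
  have "Inf K \<le> Inf J" using cInf_superset_mono[OF ne bb(1) assms(4)] .
  moreover have "Sup J \<le> Sup K" using cSup_subset_mono[OF ne bb(2) assms(4)] .
  ultimately show ?thesis
    using v_hull[OF assms(1,2) True] v_hull[OF assms(1,3) nK] hJ hK
      v_cc_mono[OF assms(1), of "Inf K" "Inf J" "Sup J" "Sup K"] by linarith
qed

lemma v_cover:
  assumes val: "valuation v" and fin: "finite K"
    and "0 \<le> p" "p \<le> q" "q \<le> 1" "\<forall>i\<in>K. 0 \<le> l i \<and> l i \<le> r i \<and> r i \<le> 1"
    and "{p..q} \<subseteq> (\<Union>i\<in>K. {l i..r i})"
  shows "v {p..q} \<le> (\<Sum>i\<in>K. v {l i..r i})"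
  using fin assms(3-)
proof (induction K arbitrary: p q rule: finite_remove_induct)
  case empty then show ?case by auto
next
  case (remove A p q)
  have nn: "\<And>i. i \<in> A \<Longrightarrow> v {l i..r i} \<ge> 0" using remove.prems(4) v_nonneg[OF val] cake_cc by auto
  obtain j where j: "j \<in> A" "q \<in> {l j..r j}" using remove.prems by auto
  have sumj: "(\<Sum>i\<in>A. v {l i..r i}) = v {l j..r j} + (\<Sum>i\<in>A-{j}. v {l i..r i})"
    using j(1) remove.hyps(1) by (simp add: sum.remove)
  have rest: "(\<Sum>i\<in>A-{j}. v {l i..r i}) \<ge> 0" using nn by (auto intro: sum_nonneg)
  have lj: "0 \<le> l j" "l j \<le> r j" "r j \<le> 1" using remove.prems(4) j(1) by auto
  show ?case
  proof (cases "l j \<le> p")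
    case True
    have "v {p..q} \<le> v {l j..r j}" using v_cc_mono[OF val] True remove.prems j lj by auto
    then show ?thesis using sumj rest by linarith
  next
    case False
    have sub1: "{p..<l j} \<subseteq> (\<Union>i\<in>A-{j}. {l i..r i})"
    proof
      fix x assume x: "x \<in> {p..<l j}"
      then have "x \<in> {p..q}" using j by auto
      then obtain i where "i \<in> A" "x \<in> {l i..r i}" using remove.prems(5) by auto
      moreover have "i \<noteq> j" using x calculation by auto
      ultimately show "x \<in> (\<Union>i\<in>A-{j}. {l i..r i})" by auto
    qed
    have cl: "closed (\<Union>i\<in>A-{j}. {l i..r i})" using remove.hyps(1) by (intro closed_UN) auto
    have "closure {p..<l j} \<subseteq> (\<Union>i\<in>A-{j}. {l i..r i})" using closure_minimal[OF sub1 cl] .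
    then have sub2: "{p..l j} \<subseteq> (\<Union>i\<in>A-{j}. {l i..r i})" using False by simp
    have ih: "v {p..l j} \<le> (\<Sum>i\<in>A-{j}. v {l i..r i})"
      using remove.IH[OF j(1), of p "l j"] remove.prems sub2 False lj by auto
    have "v {p..q} = v {p..l j} + v {l j..q}" using v_split[OF val] remove.prems j False by auto
    moreover have "v {l j..q} \<le> v {l j..r j}" using v_cc_mono[OF val] j lj by auto
    ultimately show ?thesis using sumj ih by linarith
  qed
qed

lemma int_disjoint_hull:
  assumes "cake_interval I" "nondeg I" "cake_interval J" "nondeg J" "int_disjoint I J"
  shows "int_disjoint {Inf I..Sup I} {Inf J..Sup J}"
proof -
  note hI = hull_facts[OF assms(1,2)] and hJ = hull_facts[OF assms(3,4)]
  { fix x y assume xy: "x \<in> {Inf I..Sup I} \<inter> {Inf J..Sup J}" "y \<in> {Inf I..Sup I} \<inter> {Inf J..Sup J}" "x < y"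
    let ?a = "(2*x+y)/3" and ?b = "(x+2*y)/3"
    have "?a \<in> I \<inter> J" "?b \<in> I \<inter> J" using xy hI(2) hJ(2) by auto
    then have "?a = ?b" using assms(5) unfolding int_disjoint_iff by blast
    then have False using xy(3) by simp }
  then show ?thesis unfolding int_disjoint_iff by (meson linorder_neqE_linordered_idom)
qed

lemma int_disjoint_Un:
  assumes "is_interval (C::real set)" "int_disjoint C P" "int_disjoint C Q" "is_interval (P \<union> Q)"
  shows "int_disjoint C (P \<union> Q)"
proof -
  { fix x y assume xy: "x \<in> C \<inter> (P \<union> Q)" "y \<in> C \<inter> (P \<union> Q)" "x < y"
    let ?m = "(x+y)/2"
    have mm: "x \<le> ?m" "?m \<le> y" using xy(3) by auto
    have mC: "?m \<in> C" using assms(1)[unfolded is_interval_1, rule_format, of x y ?m] xy mm by blast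
    have mPQ: "?m \<in> P \<union> Q" using assms(4)[unfolded is_interval_1, rule_format, of x y ?m] xy mm by blast
    have dP: "\<And>u w. u \<in> C \<Longrightarrow> u \<in> P \<Longrightarrow> w \<in> C \<Longrightarrow> w \<in> P \<Longrightarrow> u = w"
      using assms(2) unfolding int_disjoint_iff by blast
    have dQ: "\<And>u w. u \<in> C \<Longrightarrow> u \<in> Q \<Longrightarrow> w \<in> C \<Longrightarrow> w \<in> Q \<Longrightarrow> u = w"
      using assms(3) unfolding int_disjoint_iff by blast
    have ne: "x \<noteq> ?m" "?m \<noteq> y" "x \<noteq> y" using xy(3) by auto
    have xC: "x \<in> C" "x \<in> P \<or> x \<in> Q" "y \<in> C" "y \<in> P \<or> y \<in> Q" using xy by auto
    have gen: "\<And>a b c. a\<in>C \<Longrightarrow> b\<in>C \<Longrightarrow> c\<in>C \<Longrightarrow> a\<in>P\<or>a\<in>Q \<Longrightarrow> b\<in>P\<or>b\<in>Q \<Longrightarrow> c\<in>P\<or>c\<in>Q \<Longrightarrow> a=b \<or> a=c \<or> b=c"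
      using dP dQ by blast
    have "x = ?m \<or> x = y \<or> ?m = y"
      using gen[OF xC(1) mC xC(3) xC(2) _ xC(4)] mPQ by blast
    then have False using xy(3) by auto }
  then show ?thesis unfolding int_disjoint_iff by (meson linorder_neqE_linordered_idom)
qed



lemma Inf_Int_cases:
  fixes S T :: "real set"
  assumes "is_interval S" "is_interval T" "S \<inter> T \<noteq> {}" "bdd_below S" "bdd_below T"
  shows "Inf (S \<inter> T) = Inf S \<or> Inf (S \<inter> T) = Inf T"
proof (rule ccontr)
  assume H: "\<not> ?thesis"
  let ?m = "Inf (S \<inter> T)"
  have bST: "bdd_below (S \<inter> T)" using assms(4) by (meson bdd_below_mono inf_le1)
  have "Inf S \<le> ?m" using cInf_superset_mono[OF assms(3) assms(4)] by simp
  then have lS: "Inf S < ?m" using H by auto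
  have "Inf T \<le> ?m" using cInf_superset_mono[OF assms(3) assms(5)] by simp
  then have lT: "Inf T < ?m" using H by auto
  have neS: "S \<noteq> {}" and neT: "T \<noteq> {}" using assms(3) by auto
  obtain s where s: "s \<in> S" "s < ?m" using cInf_less_iff[OF neS assms(4)] lS by auto
  obtain t where t: "t \<in> T" "t < ?m" using cInf_less_iff[OF neT assms(5)] lT by auto
  obtain u where u: "u \<in> S \<inter> T" using assms(3) by auto
  have mu: "?m \<le> u" using cInf_lower[OF u bST] .
  define w where "w = max s t"
  have w1: "s \<le> w" "t \<le> w" "w \<le> u" "w < ?m" using s t mu unfolding w_def by auto
  have wS: "w \<in> S" using assms(1)[unfolded is_interval_1, rule_format, of s u w] s(1) u w1 by blast
  have wT: "w \<in> T" using assms(2)[unfolded is_interval_1, rule_format, of t u w] t(1) u w1 by blast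
  have "?m \<le> w" using cInf_lower[of w "S \<inter> T", OF _ bST] wS wT by blast
  then show False using w1 by linarith
qed

lemma nondeg_right:
  assumes "cake_interval S" "nondeg S"
  shows "\<exists>y>Inf S. {Inf S<..<y} \<subseteq> S"
  using hull_facts[OF assms] by (intro exI[of _ "Sup S"]) auto

lemma prod_le_two_pow:
  fixes k :: "nat \<Rightarrow> nat"
  assumes "(\<Sum>a<n. k a) \<le> 2 * n"
  shows "(\<Prod>a<n. real (k a)) \<le> 2 ^ n"
proof -
  have each: "real (k a) \<le> 2 * exp ((real (k a) - 2) / 2)" for a
  proof -
    have e: "1 + (real (k a) - 2) / 2 \<le> exp ((real (k a) - 2) / 2)" by (rule exp_ge_add_one_self)
    have "real (k a) = 2 * (1 + (real (k a) - 2) / 2)" by (simp add: field_simps)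
    then show ?thesis using mult_left_mono[OF e, of 2] by simp
  qed
  have "(\<Prod>a<n. real (k a)) \<le> (\<Prod>a<n. 2 * exp ((real (k a) - 2) / 2))"
    by (intro prod_mono) (use each in auto)
  also have "\<dots> = 2 ^ n * exp (\<Sum>a<n. (real (k a) - 2) / 2)"
    by (simp add: prod.distrib exp_sum)
  finally have X: "(\<Prod>a<n. real (k a)) \<le> 2 ^ n * exp (\<Sum>a<n. (real (k a) - 2) / 2)" .
  have eq1: "(\<Sum>a<n. (real (k a) - 2) / 2) = (\<Sum>a<n. (real (k a) - 2)) / 2"
    by (rule sum_divide_distrib[symmetric])
  have eq2: "(\<Sum>a<n. (real (k a) - 2)) = (\<Sum>a<n. real (k a)) - 2 * real n"
    by (simp add: sum_subtractf)
  have eq: "(\<Sum>a<n. (real (k a) - 2) / 2) = ((\<Sum>a<n. real (k a)) - 2 * real n) / 2"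
    using eq1 eq2 by simp
  have "real (\<Sum>a<n. k a) \<le> real (2 * n)" using assms by (simp only: of_nat_le_iff)
  then have "(\<Sum>a<n. (real (k a) - 2) / 2) \<le> 0" unfolding eq by simp
  then have "exp (\<Sum>a<n. (real (k a) - 2) / 2) \<le> 1" by simp
  then have "2 ^ n * exp (\<Sum>a<n. (real (k a) - 2) / 2) \<le> 2 ^ n * (1::real)"
    by (intro mult_left_mono) simp_all
  then show ?thesis using X by linarith
qed



lemma cake_Int: "cake_interval I \<Longrightarrow> cake_interval J \<Longrightarrow> cake_interval (I \<inter> J)"
  unfolding cake_interval_def by (auto intro: is_interval_Int)

lemma bdd_cake: "cake_interval I \<Longrightarrow> bdd_below I \<and> bdd_above I"
  unfolding cake_interval_def using bdd_below_Icc bdd_above_Icc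
  by (meson bdd_below_mono bdd_above_mono)

lemma single_Inf_Sup: assumes "S \<noteq> {}" "\<not> nondeg S"
  shows "\<exists>x. S = {x}"
proof -
  obtain x where "x \<in> S" using assms(1) by auto
  moreover have "\<And>y. y \<in> S \<Longrightarrow> y = x" using assms(2) calculation unfolding nondeg_def
    by (metis linorder_neqE_linordered_idom)
  ultimately show ?thesis by blast
qed

lemma part1:
  fixes n :: nat and v :: "nat \<Rightarrow> real set \<Rightarrow> real" and \<alpha> :: real and E Ao :: "nat \<Rightarrow> real set"
  assumes val: "\<forall>a<n. valuation (v a)" and al: "\<alpha> \<ge> 1"
    and aE: "allocation n E" and ef: "approx_EF n v \<alpha> E" and aO: "allocation n Ao"
  shows "(\<Prod>a<n. v a (Ao a)) \<le> (2*\<alpha>)^n * (\<Prod>a<n. v a (E a))"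
proof -
  define K where "K a = {b. b < n \<and> nondeg (Ao a \<inter> E b)}" for a
  have finK: "finite (K a)" for a unfolding K_def by auto
  have cE: "\<And>b. b < n \<Longrightarrow> cake_interval (E b)" using aE unfolding allocation_def by auto
  have cO: "\<And>b. b < n \<Longrightarrow> cake_interval (Ao b)" using aO unfolding allocation_def by auto
  have uE: "(\<Union>b<n. E b) = {0..1}" using aE unfolding allocation_def by auto
  have dO: "\<And>a b. a < n \<Longrightarrow> b < n \<Longrightarrow> a \<noteq> b \<Longrightarrow> int_disjoint (Ao a) (Ao b)"
    using aO unfolding allocation_def by auto
  have dE: "\<And>a b. a < n \<Longrightarrow> b < n \<Longrightarrow> a \<noteq> b \<Longrightarrow> int_disjoint (E a) (E b)"
    using aE unfolding allocation_def by auto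
  have enn: "\<And>a. a < n \<Longrightarrow> v a (E a) \<ge> 0" using val cE v_nonneg by blast
  have onn: "\<And>a. a < n \<Longrightarrow> v a (Ao a) \<ge> 0" using val cO v_nonneg by blast
  have efb: "\<And>a b. a < n \<Longrightarrow> b < n \<Longrightarrow> v a (E b) \<le> \<alpha> * v a (E a)"
  proof -
    fix a b assume ab: "a < n" "b < n"
    have "v a (E a) \<ge> (1/\<alpha>) * v a (E b)" using ef ab unfolding approx_EF_def by auto
    then have "\<alpha> * v a (E a) \<ge> \<alpha> * ((1/\<alpha>) * v a (E b))" using al by (intro mult_left_mono) auto
    then show "v a (E b) \<le> \<alpha> * v a (E a)" using al by simp
  qed
  have claim1: "v a (Ao a) \<le> real (card (K a)) * (\<alpha> * v a (E a))" if a: "a < n" for a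
  proof (cases "nondeg (Ao a)")
    case False
    then show ?thesis using v_degen[of "v a" "Ao a"] val cO a enn[OF a] al by simp
  next
    case True
    have va: "valuation (v a)" using val a by auto
    note h = hull_facts[OF cO[OF a] True]
    define p where "p = Inf (Ao a)"
    define q where "q = Sup (Ao a)"
    define K' where "K' = {b. b < n \<and> Ao a \<inter> E b \<noteq> {}}"
    define l where "l b = Inf (Ao a \<inter> E b)" for b
    define r where "r b = Sup (Ao a \<inter> E b)" for b
    have finK': "finite K'" unfolding K'_def by auto
    have KK: "K a \<subseteq> K'" unfolding K_def K'_def nondeg_def by auto
    have inlr: "b < n \<Longrightarrow> x \<in> Ao a \<inter> E b \<Longrightarrow> l b \<le> x \<and> x \<le> r b" for b x
      using bdd_cake[OF cake_Int[OF cO[OF a] cE]] unfolding l_def r_def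
      by (meson cInf_lower cSup_upper)
    have bnd: "\<forall>b\<in>K'. 0 \<le> l b \<and> l b \<le> r b \<and> r b \<le> 1"
    proof
      fix b assume b: "b \<in> K'"
      then obtain x where x: "x \<in> Ao a \<inter> E b" and bn: "b < n" unfolding K'_def by auto
      have sub: "Ao a \<inter> E b \<subseteq> {0..1}" using cE[OF bn] unfolding cake_interval_def by auto
      have "0 \<le> l b" unfolding l_def using x sub by (intro cInf_greatest) auto
      moreover have "r b \<le> 1" unfolding r_def using x sub by (intro cSup_least) auto
      ultimately show "0 \<le> l b \<and> l b \<le> r b \<and> r b \<le> 1" using inlr[OF bn x] by linarith
    qed
    have cov0: "{p<..<q} \<subseteq> (\<Union>b\<in>K'. {l b..r b})"
    proof
      fix x assume "x \<in> {p<..<q}"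
      then have xA: "x \<in> Ao a" using h(2) unfolding p_def q_def by auto
      then have "x \<in> {0..1}" using cO[OF a] unfolding cake_interval_def by auto
      then have "x \<in> (\<Union>b<n. E b)" using uE by simp
      then obtain b where b: "b < n" "x \<in> E b" by auto
      then have "b \<in> K'" using xA unfolding K'_def by auto
      then show "x \<in> (\<Union>b\<in>K'. {l b..r b})" using inlr[OF b(1)] xA b(2) by auto
    qed
    have cl: "closed (\<Union>b\<in>K'. {l b..r b})" using finK' by (intro closed_UN) auto
    have pq: "p < q" using h(1) unfolding p_def q_def .
    have cov: "{p..q} \<subseteq> (\<Union>b\<in>K'. {l b..r b})"
      using closure_minimal[OF cov0 cl] pq by simp
    have "v a {p..q} \<le> (\<Sum>b\<in>K'. v a {l b..r b})"
      using v_cover[OF va finK' _ _ _ bnd cov] h pq unfolding p_def q_def by auto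
    also have "\<dots> \<le> (\<Sum>b\<in>K'. if b \<in> K a then \<alpha> * v a (E a) else 0)"
    proof (rule sum_mono)
      fix b assume b: "b \<in> K'"
      then have bn: "b < n" unfolding K'_def by auto
      have cS: "cake_interval (Ao a \<inter> E b)" using cake_Int cO cE a bn by auto
      show "v a {l b..r b} \<le> (if b \<in> K a then \<alpha> * v a (E a) else 0)"
      proof (cases "b \<in> K a")
        case True
        then have nd: "nondeg (Ao a \<inter> E b)" unfolding K_def by auto
        have "v a {l b..r b} = v a (Ao a \<inter> E b)" using v_hull[OF va cS nd] unfolding l_def r_def by simp
        also have "\<dots> \<le> v a (E b)" using v_mono[OF va cS cE[OF bn]] by auto
        also have "\<dots> \<le> \<alpha> * v a (E a)" using efb[OF a bn] .
        finally show ?thesis using True by simp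
      next
        case False
        then have nd: "\<not> nondeg (Ao a \<inter> E b)" using bn unfolding K_def by auto
        obtain x where "Ao a \<inter> E b = {x}" using single_Inf_Sup[OF _ nd] b unfolding K'_def by auto
        then have "l b = x" "r b = x" unfolding l_def r_def by auto
        moreover have "0 \<le> x" "x \<le> 1" using bnd b calculation by auto
        ultimately show ?thesis using v_point[OF va] False by simp
      qed
    qed
    also have "\<dots> = real (card (K a)) * (\<alpha> * v a (E a))"
    proof -
      have "(\<Sum>b\<in>K'. if b \<in> K a then \<alpha> * v a (E a) else 0) = (\<Sum>b\<in>K' \<inter> K a. \<alpha> * v a (E a))"
        using sum.inter_restrict[OF finK', of "\<lambda>_. \<alpha> * v a (E a)" "K a"] by simp
      also have "K' \<inter> K a = K a" using KK by auto
      finally show ?thesis by simp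
    qed
    finally show ?thesis using v_hull[OF va cO[OF a] True] unfolding p_def q_def by simp
  qed
  have claim2: "(\<Sum>a<n. card (K a)) \<le> 2 * n"
  proof -
    define Sig where "Sig = Sigma {..<n} K"
    have cSig: "card Sig = (\<Sum>a<n. card (K a))" unfolding Sig_def using finK by simp
    define g where "g = (\<lambda>(a,b). Inf (Ao a \<inter> E b))"
    have inj: "inj_on g Sig"
    proof (rule inj_onI)
      fix x y assume x: "x \<in> Sig" and y: "y \<in> Sig" and gxy: "g x = g y"
      obtain a b where xab: "x = (a,b)" by (cases x)
      obtain a' b' where yab: "y = (a',b')" by (cases y)
      have an: "a < n" "b < n" "nondeg (Ao a \<inter> E b)" using x xab unfolding Sig_def K_def by auto
      have an': "a' < n" "b' < n" "nondeg (Ao a' \<inter> E b')" using y yab unfolding Sig_def K_def by auto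
      let ?S = "Ao a \<inter> E b" and ?S' = "Ao a' \<inter> E b'"
      have m: "Inf ?S = Inf ?S'" using gxy xab yab unfolding g_def by simp
      obtain y1 where y1: "y1 > Inf ?S" "{Inf ?S<..<y1} \<subseteq> ?S"
        using nondeg_right[OF cake_Int[OF cO cE] an(3)] an by blast
      obtain y2 where y2: "y2 > Inf ?S'" "{Inf ?S'<..<y2} \<subseteq> ?S'"
        using nondeg_right[OF cake_Int[OF cO cE] an'(3)] an' by blast
      define m0 where "m0 = Inf ?S"
      define y0 where "y0 = min y1 y2"
      have y0: "y0 > m0" using y1 y2 m unfolding y0_def m0_def by auto
      define u where "u = m0 + (y0 - m0)/3"
      define w where "w = m0 + 2*(y0 - m0)/3"
      have o1: "m0 < u" "u < y0" "m0 < w" "w < y0" "u \<noteq> w" using y0 unfolding u_def w_def by (auto simp: field_simps)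
      have o2: "y0 \<le> y1" "y0 \<le> y2" unfolding y0_def by auto
      have s1: "{m0<..<y1} \<subseteq> ?S" using y1(2) unfolding m0_def .
      have s2: "{m0<..<y2} \<subseteq> ?S'" using y2(2) m unfolding m0_def by simp
      have "u \<in> {m0<..<y1}" "w \<in> {m0<..<y1}" "u \<in> {m0<..<y2}" "w \<in> {m0<..<y2}"
        using o1 o2 by auto
      then have uw: "u \<in> ?S" "u \<in> ?S'" "w \<in> ?S" "w \<in> ?S'" "u \<noteq> w"
        using s1 s2 o1 by blast+
      have "a = a'"
      proof (rule ccontr)
        assume "a \<noteq> a'"
        then have "int_disjoint (Ao a) (Ao a')" using dO an an' by auto
        then show False using uw unfolding int_disjoint_iff by blast
      qed
      moreover have "b = b'"
      proof (rule ccontr)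
        assume "b \<noteq> b'"
        then have "int_disjoint (E b) (E b')" using dE an an' by auto
        then show False using uw unfolding int_disjoint_iff by blast
      qed
      ultimately show "x = y" using xab yab by simp
    qed
    have img: "g ` Sig \<subseteq> (\<lambda>c. Inf (Ao c)) ` {..<n} \<union> (\<lambda>c. Inf (E c)) ` {..<n}"
    proof
      fix z assume "z \<in> g ` Sig"
      then obtain a b where ab: "a < n" "b < n" "nondeg (Ao a \<inter> E b)" "z = Inf (Ao a \<inter> E b)"
        unfolding Sig_def K_def g_def by auto
      have ne: "Ao a \<inter> E b \<noteq> {}" using ab(3) unfolding nondeg_def by auto
      have "Inf (Ao a \<inter> E b) = Inf (Ao a) \<or> Inf (Ao a \<inter> E b) = Inf (E b)"
        using Inf_Int_cases[OF _ _ ne] cO[OF ab(1)] cE[OF ab(2)] bdd_cake[OF cO[OF ab(1)]] bdd_cake[OF cE[OF ab(2)]]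
        unfolding cake_interval_def by (meson conjunct1)
      then show "z \<in> (\<lambda>c. Inf (Ao c)) ` {..<n} \<union> (\<lambda>c. Inf (E c)) ` {..<n}" using ab by auto
    qed
    have "card Sig = card (g ` Sig)" using card_image[OF inj] by simp
    also have "\<dots> \<le> card ((\<lambda>c. Inf (Ao c)) ` {..<n} \<union> (\<lambda>c. Inf (E c)) ` {..<n})"
      using img by (intro card_mono) auto
    also have "\<dots> \<le> card ((\<lambda>c. Inf (Ao c)) ` {..<n}) + card ((\<lambda>c. Inf (E c)) ` {..<n})"
      by (rule card_Un_le)
    also have "\<dots> \<le> n + n" using card_image_le[of "{..<n}"] by (intro add_mono) auto
    finally show ?thesis using cSig by simp
  qed
  have claim3: "(\<Prod>a<n. real (card (K a))) \<le> 2 ^ n" using prod_le_two_pow[OF claim2] .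
  have "(\<Prod>a<n. v a (Ao a)) \<le> (\<Prod>a<n. real (card (K a)) * (\<alpha> * v a (E a)))"
    using claim1 onn by (intro prod_mono) auto
  also have "\<dots> = (\<Prod>a<n. real (card (K a))) * (\<alpha> ^ n * (\<Prod>a<n. v a (E a)))"
    by (simp add: prod.distrib)
  also have "\<dots> \<le> 2 ^ n * (\<alpha> ^ n * (\<Prod>a<n. v a (E a)))"
  proof (rule mult_right_mono[OF claim3])
    show "0 \<le> \<alpha> ^ n * (\<Prod>a<n. v a (E a))" using al enn by (intro mult_nonneg_nonneg prod_nonneg) auto
  qed
  also have "\<dots> = (2*\<alpha>)^n * (\<Prod>a<n. v a (E a))" by (simp add: power_mult_distrib)
  finally show ?thesis .
qed



lemma pos_alloc_aux:
  fixes v :: "nat \<Rightarrow> real set \<Rightarrow> real"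
  assumes val: "\<forall>a<n. valuation (v a)"
  shows "finite S \<Longrightarrow> card S = Suc k \<Longrightarrow> S \<subseteq> {..<n} \<Longrightarrow> 0 \<le> x \<Longrightarrow> x \<le> 1 \<Longrightarrow> (\<forall>a\<in>S. v a {x..1} > 0) \<Longrightarrow>
    \<exists>B. (\<forall>a\<in>S. \<exists>l r. B a = {l..r} \<and> x \<le> l \<and> l \<le> r \<and> r \<le> 1) \<and>
        (\<forall>a\<in>S. \<forall>b\<in>S. a \<noteq> b \<longrightarrow> int_disjoint (B a) (B b)) \<and>
        (\<Union>a\<in>S. B a) = {x..1} \<and> (\<forall>a\<in>S. v a (B a) > 0)"
proof (induction k arbitrary: S x)
  case 0
  then have "card S = 1" by simp
  then obtain a where S: "S = {a}" by (rule card_1_singletonE)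
  show ?case
    by (rule exI[of _ "\<lambda>_. {x..1}"]) (use S 0 in auto)
next
  case (Suc k)
  have vS: "\<And>a. a \<in> S \<Longrightarrow> valuation (v a)" using Suc.prems(3) val by auto
  have "\<forall>a\<in>S. \<exists>z. z \<in> {x..1} \<and> v a {x..z} = 1/2 * v a {x..1}"
  proof
    fix a assume "a \<in> S"
    then have dv: "\<forall>x y l. 0 \<le> x \<and> x \<le> y \<and> y \<le> 1 \<and> 0 \<le> l \<and> l \<le> 1 \<longrightarrow>
        (\<exists>z\<in>{x..y}. v a {x..z} = l * v a {x..y})" using vS unfolding valuation_def by blast
    show "\<exists>z. z \<in> {x..1} \<and> v a {x..z} = 1/2 * v a {x..1}"
      using dv[rule_format, of x 1 "1/2"] Suc.prems(4,5) by auto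
  qed
  then obtain z where z: "\<And>a. a \<in> S \<Longrightarrow> z a \<in> {x..1} \<and> v a {x..z a} = 1/2 * v a {x..1}"
    by metis
  have neS: "S \<noteq> {}" using Suc.prems(2) by auto
  define m where "m = Min (z ` S)"
  have "m \<in> z ` S" unfolding m_def using Suc.prems(1) neS by (intro Min_in) auto
  then obtain a0 where a0: "a0 \<in> S" "z a0 = m" by auto
  have mle: "\<And>a. a \<in> S \<Longrightarrow> m \<le> z a" unfolding m_def using Suc.prems(1) by auto
  have m01: "x \<le> m" "m \<le> 1" using z[OF a0(1)] a0(2) by auto
  have rest_pos: "\<And>b. b \<in> S \<Longrightarrow> v b {z b..1} > 0"
  proof -
    fix b assume b: "b \<in> S"
    have "v b {x..1} = v b {x..z b} + v b {z b..1}" using v_split[OF vS[OF b]] z[OF b] Suc.prems(4) by auto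
    then show "v b {z b..1} > 0" using z[OF b] Suc.prems(6) b by auto
  qed
  define S' where "S' = S - {a0}"
  have cS': "card S' = Suc k" unfolding S'_def using Suc.prems(1,2) a0(1) by simp
  have pS': "\<forall>b\<in>S'. v b {m..1} > 0"
  proof
    fix b assume b: "b \<in> S'"
    then have bS: "b \<in> S" unfolding S'_def by auto
    have "v b {z b..1} \<le> v b {m..1}" using v_cc_mono[OF vS[OF bS]] mle[OF bS] z[OF bS] m01 Suc.prems(4) by auto
    then show "v b {m..1} > 0" using rest_pos[OF bS] by linarith
  qed
  obtain B' where B': "\<forall>a\<in>S'. \<exists>l r. B' a = {l..r} \<and> m \<le> l \<and> l \<le> r \<and> r \<le> 1"
      "\<forall>a\<in>S'. \<forall>b\<in>S'. a \<noteq> b \<longrightarrow> int_disjoint (B' a) (B' b)"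
      "(\<Union>a\<in>S'. B' a) = {m..1}" "\<forall>a\<in>S'. v a (B' a) > 0"
  proof -
    have "finite S'" "S' \<subseteq> {..<n}" "0 \<le> m" using Suc.prems(1,3,4) m01 unfolding S'_def by auto
    from Suc.IH[OF this(1) cS' this(2,3) m01(2) pS'] show ?thesis using that by blast
  qed
  define B where "B = B'(a0 := {x..m})"
  have sub: "\<And>b. b \<in> S' \<Longrightarrow> B' b \<subseteq> {m..1}" using B'(3) by auto
  have d0: "\<And>b. b \<in> S' \<Longrightarrow> int_disjoint {x..m} (B' b)"
  proof -
    fix b assume "b \<in> S'"
    then have "B' b \<subseteq> {m..1}" by (rule sub)
    then show "int_disjoint {x..m} (B' b)" unfolding int_disjoint_def by (intro exI[of _ m]) auto
  qed
  have pa0: "v a0 {x..m} > 0" using z[OF a0(1)] a0(2) Suc.prems(6) a0(1) by auto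
  have SS: "S = insert a0 S'" unfolding S'_def using a0 by auto
  have a0S': "a0 \<notin> S'" unfolding S'_def by auto
  show ?case
  proof (rule exI[of _ B], intro conjI)
    show "\<forall>a\<in>S. \<exists>l r. B a = {l..r} \<and> x \<le> l \<and> l \<le> r \<and> r \<le> 1"
    proof
      fix a assume a: "a \<in> S"
      show "\<exists>l r. B a = {l..r} \<and> x \<le> l \<and> l \<le> r \<and> r \<le> 1"
      proof (cases "a = a0")
        case True then show ?thesis unfolding B_def using m01 by auto
      next
        case False
        then have "a \<in> S'" using a unfolding S'_def by auto
        then obtain l r where "B' a = {l..r}" "m \<le> l" "l \<le> r" "r \<le> 1" using B'(1) by blast
        then show ?thesis unfolding B_def using False m01 by (intro exI[of _ l] exI[of _ r]) auto
      qed
    qed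
    show "\<forall>a\<in>S. \<forall>b\<in>S. a \<noteq> b \<longrightarrow> int_disjoint (B a) (B b)"
    proof (intro ballI impI)
      fix a b assume a: "a \<in> S" and b: "b \<in> S" and ab: "a \<noteq> b"
      show "int_disjoint (B a) (B b)"
      proof (cases "a = a0")
        case True
        then have "b \<in> S'" using b ab unfolding S'_def by auto
        then show ?thesis using d0 True ab unfolding B_def by auto
      next
        case False
        then have aS': "a \<in> S'" using a unfolding S'_def by auto
        show ?thesis
        proof (cases "b = a0")
          case True
          then show ?thesis using d0[OF aS'] False int_disjoint_commute unfolding B_def by auto
        next
          case False2: False
          then have "b \<in> S'" using b unfolding S'_def by auto
          then show ?thesis using B'(2) aS' ab False False2 unfolding B_def by auto
        qed
      qed
    qed
    have "(\<Union>a\<in>S. B a) = {x..m} \<union> (\<Union>a\<in>S'. B' a)" unfolding B_def SS using a0S' by auto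
    also have "\<dots> = {x..1}" using B'(3) m01 by auto
    finally show "(\<Union>a\<in>S. B a) = {x..1}" .
    show "\<forall>a\<in>S. v a (B a) > 0" unfolding B_def SS using B'(4) pa0 a0S' by auto
  qed
qed

lemma pos_alloc:
  fixes v :: "nat \<Rightarrow> real set \<Rightarrow> real"
  assumes val: "\<forall>a<n. valuation (v a)" and n: "n \<ge> 1"
  shows "\<exists>B. allocation n B \<and> (\<forall>a<n. v a (B a) > 0)"
proof -
  have "\<forall>a\<in>{..<n}. v a {0..1} > 0" using val unfolding valuation_def by auto
  then obtain B where B: "\<forall>a\<in>{..<n}. \<exists>l r. B a = {l..r} \<and> 0 \<le> l \<and> l \<le> r \<and> r \<le> 1"
      "\<forall>a\<in>{..<n}. \<forall>b\<in>{..<n}. a \<noteq> b \<longrightarrow> int_disjoint (B a) (B b)"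
      "(\<Union>a\<in>{..<n}. B a) = {0..1}" "\<forall>a\<in>{..<n}. v a (B a) > 0"
    using pos_alloc_aux[OF val, of "{..<n}" "n - 1" 0] n by auto
  have "\<forall>a<n. cake_interval (B a)"
  proof (intro allI impI)
    fix a assume "a < n"
    then obtain l r where "B a = {l..r}" "0 \<le> l" "l \<le> r" "r \<le> 1" using B(1) by blast
    then show "cake_interval (B a)" using cake_cc by simp
  qed
  then show ?thesis using B unfolding allocation_def by auto
qed



lemma touch_union:
  fixes p q r s :: real
  assumes "p \<le> q" "r \<le> s" "{p..q} \<inter> {r..s} \<noteq> {}"
  shows "{p..q} \<union> {r..s} = {min p r..max q s}"
proof -
  have i: "p \<le> s" "r \<le> q" using assms(3) by auto
  define t where "t = max p r"
  have t: "p \<le> t" "t \<le> q" "r \<le> t" "t \<le> s" using i assms(1,2) unfolding t_def by auto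
  show ?thesis
  proof
    show "{p..q} \<union> {r..s} \<subseteq> {min p r..max q s}" by auto
    show "{min p r..max q s} \<subseteq> {p..q} \<union> {r..s}"
    proof
      fix x assume x: "x \<in> {min p r..max q s}"
      show "x \<in> {p..q} \<union> {r..s}"
      proof (cases "x \<le> t")
        case True then show ?thesis using x t by (auto simp: min_def split: if_splits)
      next
        case False then show ?thesis using x t by (auto simp: max_def split: if_splits)
      qed
    qed
  qed
qed

lemma split_lemma:
  assumes va: "valuation va" and vb: "valuation vb" and "0 \<le> u" "u \<le> w" "w \<le> 1"
  shows "\<exists>Pa Pb. Pa \<union> Pb = {u..w} \<and> int_disjoint Pa Pb \<and> cake_interval Pa \<and> cake_interval Pb
     \<and> va Pa \<ge> va {u..w} / 2 \<and> vb Pb \<ge> vb {u..w} / 2"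
proof -
  have dv: "\<forall>x y l. 0 \<le> x \<and> x \<le> y \<and> y \<le> 1 \<and> 0 \<le> l \<and> l \<le> 1 \<longrightarrow>
        (\<exists>z\<in>{x..y}. vb {x..z} = l * vb {x..y})" using vb unfolding valuation_def by blast
  obtain z where z: "z \<in> {u..w}" "vb {u..z} = 1/2 * vb {u..w}"
    using dv[rule_format, of u w "1/2"] assms by auto
  have zz: "u \<le> z" "z \<le> w" using z(1) by auto
  have sb: "vb {u..w} = vb {u..z} + vb {z..w}" using v_split[OF vb assms(3) zz assms(5)] .
  have sa: "va {u..w} = va {u..z} + va {z..w}" using v_split[OF va assms(3) zz assms(5)] .
  have un: "{u..z} \<union> {z..w} = {u..w}" using z by auto
  have dj: "int_disjoint {u..z} {z..w}" unfolding int_disjoint_def by (intro exI[of _ z]) auto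
  have c1: "cake_interval {u..z}" "cake_interval {z..w}" using cake_cc z assms by auto
  show ?thesis
  proof (cases "va {u..z} \<ge> va {u..w} / 2")
    case True
    show ?thesis
      by (rule exI[of _ "{u..z}"], rule exI[of _ "{z..w}"]) (use True un dj c1 sb z in auto)
  next
    case False
    show ?thesis
      by (rule exI[of _ "{z..w}"], rule exI[of _ "{u..z}"])
        (use False un int_disjoint_commute[OF dj] c1 sb sa z in auto)
  qed
qed

lemma neighbor:
  fixes H :: "nat \<Rightarrow> real set"
  assumes "\<forall>d<n. closed (H d)" "(\<Union>d<n. H d) = {0..1}" "a < n" "b < n" "b \<noteq> a" "H a \<noteq> {}" "H b \<noteq> {}"
  shows "\<exists>c<n. c \<noteq> a \<and> H a \<inter> H c \<noteq> {}"
proof (rule ccontr)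
  assume N: "\<not> ?thesis"
  define U where "U = (\<Union>d\<in>{d. d < n \<and> d \<noteq> a}. H d)"
  have cU: "closed U" unfolding U_def using assms(1) by (intro closed_UN) auto
  have cA: "closed (H a)" using assms(1,3) by auto
  have cov: "{0..1} \<subseteq> H a \<union> U" using assms(2) unfolding U_def by auto
  have dis: "H a \<inter> U = {}" using N unfolding U_def by auto
  have sA: "H a \<subseteq> {0..1}" and sB: "H b \<subseteq> {0..1}" using assms(2,3,4) by auto
  have "H b \<subseteq> U" unfolding U_def using assms(4,5) by auto
  then have "U \<inter> {0..1} \<noteq> {}" using sB assms(7) by auto
  moreover have "H a \<inter> {0..1} \<noteq> {}" using sA assms(6) by auto
  ultimately show False using connected_Icc[of "0::real" 1] cU cA cov dis
    unfolding connected_closed by blast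
qed

lemma improve:
  fixes v :: "nat \<Rightarrow> real set \<Rightarrow> real"
  assumes pos: "\<forall>d<n. v d (A d) > 0" and ab: "a < n" "b < n" "a \<noteq> b"
    and wa: "v a (B a) > 2 * v a (A a)" and wb: "v b (B b) \<ge> v b (A b) / 2"
    and wd: "\<forall>d<n. d \<noteq> a \<longrightarrow> d \<noteq> b \<longrightarrow> v d (B d) \<ge> v d (A d)"
  shows "NSW n v A < NSW n v B"
proof -
  define R where "R = {..<n} - {a} - {b}"
  have fin: "finite R" unfolding R_def by auto
  have pA: "(\<Prod>d<n. v d (A d)) = v a (A a) * (v b (A b) * (\<Prod>d\<in>R. v d (A d)))"
    unfolding R_def using ab by (simp add: prod.remove[of "{..<n}" a] prod.remove[of "{..<n} - {a}" b])
  have pB: "(\<Prod>d<n. v d (B d)) = v a (B a) * (v b (B b) * (\<Prod>d\<in>R. v d (B d)))"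
    unfolding R_def using ab by (simp add: prod.remove[of "{..<n}" a] prod.remove[of "{..<n} - {a}" b])
  have Rpos: "(\<Prod>d\<in>R. v d (A d)) > 0" using pos unfolding R_def by (intro prod_pos) auto
  have Rle: "(\<Prod>d\<in>R. v d (A d)) \<le> (\<Prod>d\<in>R. v d (B d))"
    using pos wd unfolding R_def by (intro prod_mono) (auto simp: less_imp_le)
  have oa: "v a (A a) > 0" and ob: "v b (A b) > 0" using pos ab by auto
  have "v a (A a) * v b (A b) < v a (B a) * v b (B b)"
  proof -
    have "v a (A a) * v b (A b) = (2 * v a (A a)) * (v b (A b) / 2)" by simp
    also have "\<dots> < v a (B a) * (v b (A b) / 2)" using wa ob by (intro mult_strict_right_mono) auto
    also have "\<dots> \<le> v a (B a) * v b (B b)" using wb wa oa by (intro mult_left_mono) auto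
    finally show ?thesis .
  qed
  then have "(v a (A a) * v b (A b)) * (\<Prod>d\<in>R. v d (A d)) < (v a (B a) * v b (B b)) * (\<Prod>d\<in>R. v d (A d))"
    using Rpos by (intro mult_strict_right_mono) auto
  also have "\<dots> \<le> (v a (B a) * v b (B b)) * (\<Prod>d\<in>R. v d (B d))"
    using Rle wa wb oa ob by (intro mult_left_mono) auto
  finally have "(\<Prod>d<n. v d (A d)) < (\<Prod>d<n. v d (B d))" unfolding pA pB by (simp add: mult.assoc)
  moreover have "n > 0" using ab by auto
  ultimately show ?thesis unfolding NSW_def by (intro real_root_less_mono)
qed

lemma nash_pos:
  assumes val: "\<forall>a<n. valuation (v a)" and n: "n \<ge> 1" and opt: "nash_optimal n v A"
  shows "\<forall>d<n. v d (A d) > 0"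
proof -
  obtain B where B: "allocation n B" "\<forall>a<n. v a (B a) > 0" using pos_alloc[OF val n] by blast
  have "NSW n v B > 0" unfolding NSW_def using B(2) n by (intro real_root_gt_zero prod_pos) auto
  then have "NSW n v A > 0" using opt B(1) unfolding nash_optimal_def by force
  moreover have n0: "0 < n" using n by simp
  ultimately have P: "(\<Prod>d<n. v d (A d)) > 0" unfolding NSW_def by simp
  have cA: "\<forall>d<n. cake_interval (A d)" using opt unfolding nash_optimal_def allocation_def by auto
  show ?thesis
  proof (intro allI impI)
    fix d assume d: "d < n"
    have "v d (A d) \<ge> 0" using val cA d v_nonneg by blast
    moreover have "v d (A d) \<noteq> 0"
    proof
      assume "v d (A d) = 0"
      then have "(\<Prod>d<n. v d (A d)) = 0" using d by (auto simp: prod_zero_iff)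
      then show False using P by linarith
    qed
    ultimately show "v d (A d) > 0" by simp
  qed
qed



lemma pairwise_upd2:
  assumes base: "\<forall>d<n. \<forall>d'<n. d \<noteq> d' \<longrightarrow> d \<noteq> a \<longrightarrow> d \<noteq> b \<longrightarrow> d' \<noteq> a \<longrightarrow> d' \<noteq> b \<longrightarrow> int_disjoint (h d) (h d')"
    and ab: "a \<noteq> b" and dab: "int_disjoint Pa Pb"
    and dx: "\<forall>d<n. d \<noteq> a \<longrightarrow> d \<noteq> b \<longrightarrow> int_disjoint (h d) Pa \<and> int_disjoint (h d) Pb"
  shows "\<forall>d<n. \<forall>d'<n. d \<noteq> d' \<longrightarrow> int_disjoint ((h(a:=Pa, b:=Pb)) d) ((h(a:=Pa, b:=Pb)) d')"
proof (intro allI impI)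
  fix d d' assume d: "d < n" and d': "d' < n" and dd: "d \<noteq> d'"
  show "int_disjoint ((h(a:=Pa, b:=Pb)) d) ((h(a:=Pa, b:=Pb)) d')"
  proof (cases "d = a")
    case True
    show ?thesis
    proof (cases "d' = b")
      case True then show ?thesis using \<open>d = a\<close> ab dab by simp
    next
      case False
      then have "d' \<noteq> a" using dd True by simp
      then show ?thesis using True False ab dx d' int_disjoint_commute by auto
    qed
  next
    case nA: False
    show ?thesis
    proof (cases "d = b")
      case True
      show ?thesis
      proof (cases "d' = a")
        case True then show ?thesis using \<open>d = b\<close> ab int_disjoint_commute[OF dab] by simp
      next
        case False
        then have "d' \<noteq> b" using dd True by simp
        then show ?thesis using True False ab dx d' int_disjoint_commute by auto
      qed
    next
      case nB: False
      show ?thesis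
      proof (cases "d' = a \<or> d' = b")
        case True then show ?thesis using nA nB dx d by auto
      next
        case False then show ?thesis using nA nB base d d' dd by auto
      qed
    qed
  qed
qed

lemma part2:
  fixes v :: "nat \<Rightarrow> real set \<Rightarrow> real" and A :: "nat \<Rightarrow> real set"
  assumes val: "\<forall>a<n. valuation (v a)" and opt: "nash_optimal n v A"
  shows "approx_EF n v 4 A"
proof (rule ccontr)
  assume "\<not> approx_EF n v 4 A"
  then obtain a b where ab: "a < n" "b < n" "v a (A a) < 1/4 * v a (A b)"
    unfolding approx_EF_def by (auto simp: not_le)
  have n: "n \<ge> 1" using ab by simp
  have pos: "\<forall>d<n. v d (A d) > 0" using nash_pos[OF val n opt] .
  have aneb: "a \<noteq> b" using ab pos by auto
  have allA: "allocation n A" using opt unfolding nash_optimal_def by auto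
  have cA: "\<And>d. d < n \<Longrightarrow> cake_interval (A d)" using allA unfolding allocation_def by auto
  have dA: "\<And>d d'. d < n \<Longrightarrow> d' < n \<Longrightarrow> d \<noteq> d' \<Longrightarrow> int_disjoint (A d) (A d')"
    using allA unfolding allocation_def by auto
  have uA: "(\<Union>d<n. A d) = {0..1}" using allA unfolding allocation_def by auto
  have vd: "\<And>d. d < n \<Longrightarrow> valuation (v d)" using val by auto
  have nd: "\<And>d. d < n \<Longrightarrow> nondeg (A d)"
    using v_degen vd cA pos by (metis less_irrefl)
  define h where "h d = {Inf (A d)..Sup (A d)}" for d
  have hf: "\<And>d. d < n \<Longrightarrow> Inf (A d) < Sup (A d) \<and> A d \<subseteq> h d \<and> 0 \<le> Inf (A d) \<and> Sup (A d) \<le> 1"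
    using hull_facts[OF cA nd] unfolding h_def by auto
  have hv: "\<And>d. d < n \<Longrightarrow> v d (h d) = v d (A d)" using v_hull[OF vd cA nd] unfolding h_def by simp
  have hc: "\<And>d. d < n \<Longrightarrow> cake_interval (h d)" unfolding h_def using hf cake_cc by auto
  have hi: "\<And>d. d < n \<Longrightarrow> is_interval (h d)" using hc unfolding cake_interval_def by auto
  have hd: "\<And>d d'. d < n \<Longrightarrow> d' < n \<Longrightarrow> d \<noteq> d' \<Longrightarrow> int_disjoint (h d) (h d')"
    unfolding h_def using int_disjoint_hull cA nd dA by blast
  have hu: "(\<Union>d<n. h d) = {0..1}"
  proof
    show "(\<Union>d<n. h d) \<subseteq> {0..1}" using hc unfolding cake_interval_def by auto
    show "{0..1} \<subseteq> (\<Union>d<n. h d)" using uA hf by blast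
  qed
  have hsub: "\<And>d. d < n \<Longrightarrow> h d \<subseteq> {0..1}" using hc unfolding cake_interval_def by auto
  have big: "v a (A b) > 4 * v a (A a)" using ab by simp
  have key: "\<exists>B. allocation n B \<and> v a (B a) > 2 * v a (A a) \<and> v b (B b) \<ge> v b (A b) / 2
      \<and> (\<forall>d<n. d \<noteq> a \<longrightarrow> d \<noteq> b \<longrightarrow> v d (B d) \<ge> v d (A d))"
  proof (cases "h a \<inter> h b \<noteq> {}")
    case True
    define u where "u = min (Inf (A a)) (Inf (A b))"
    define w where "w = max (Sup (A a)) (Sup (A b))"
    have M: "h a \<union> h b = {u..w}" unfolding u_def w_def h_def
      using touch_union[of "Inf (A a)" "Sup (A a)" "Inf (A b)" "Sup (A b)"] True hf ab unfolding h_def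
      by (simp add: less_imp_le)
    have uw: "0 \<le> u" "u \<le> w" "w \<le> 1" unfolding u_def w_def using hf[OF ab(1)] hf[OF ab(2)] by (auto simp: min_def max_def)
    obtain Pa Pb where P: "Pa \<union> Pb = {u..w}" "int_disjoint Pa Pb" "cake_interval Pa" "cake_interval Pb"
       "v a Pa \<ge> v a {u..w} / 2" "v b Pb \<ge> v b {u..w} / 2"
      using split_lemma[OF vd[OF ab(1)] vd[OF ab(2)] uw] by blast
    define B where "B = h(a:=Pa, b:=Pb)"
    have Mi: "is_interval (h a \<union> h b)" unfolding M by (simp add: is_interval_cc)
    have hM: "\<And>d. d < n \<Longrightarrow> d \<noteq> a \<Longrightarrow> d \<noteq> b \<Longrightarrow> int_disjoint (h d) (h a \<union> h b)"
      using int_disjoint_Un[OF hi hd hd Mi] ab by metis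
    have PM: "Pa \<subseteq> h a \<union> h b" "Pb \<subseteq> h a \<union> h b" using P(1) M by auto
    have pw: "\<forall>d<n. \<forall>d'<n. d \<noteq> d' \<longrightarrow> int_disjoint (B d) (B d')"
      unfolding B_def
    proof (rule pairwise_upd2[OF _ aneb P(2)])
      show "\<forall>d<n. \<forall>d'<n. d \<noteq> d' \<longrightarrow> d \<noteq> a \<longrightarrow> d \<noteq> b \<longrightarrow> d' \<noteq> a \<longrightarrow> d' \<noteq> b \<longrightarrow> int_disjoint (h d) (h d')"
        using hd by blast
      show "\<forall>d<n. d \<noteq> a \<longrightarrow> d \<noteq> b \<longrightarrow> int_disjoint (h d) Pa \<and> int_disjoint (h d) Pb"
        using hM PM int_disjoint_mono by blast
    qed
    have cB: "\<forall>d<n. cake_interval (B d)" unfolding B_def using hc P(3,4) by auto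
    have uB: "(\<Union>d<n. B d) = {0..1}"
    proof
      show "(\<Union>d<n. B d) \<subseteq> {0..1}" using cB unfolding cake_interval_def by blast
      show "{0..1} \<subseteq> (\<Union>d<n. B d)"
      proof
        fix x :: real assume "x \<in> {0..1}"
        then obtain d where d: "d < n" "x \<in> h d" using hu by blast
        show "x \<in> (\<Union>d<n. B d)"
        proof (cases "d = a \<or> d = b")
          case True
          then have "x \<in> Pa \<union> Pb" using d M P(1) by auto
          then show ?thesis unfolding B_def using ab aneb by auto
        next
          case False then show ?thesis unfolding B_def using d by auto
        qed
      qed
    qed
    have alB: "allocation n B" unfolding allocation_def using cB pw uB by auto
    have "v a (h b) \<le> v a {u..w}" using v_mono[OF vd[OF ab(1)] hc[OF ab(2)] cake_cc[OF uw(1,3)]] M by auto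
    then have va: "v a (B a) > 2 * v a (A a)" unfolding B_def using P(5) aneb hv[OF ab(2)] big
      hv ab v_hull[OF vd[OF ab(1)] cA[OF ab(2)] nd[OF ab(2)]] unfolding h_def by auto
    have "v b (h b) \<le> v b {u..w}" using v_mono[OF vd[OF ab(2)] hc[OF ab(2)] cake_cc[OF uw(1,3)]] M by auto
    then have vb: "v b (B b) \<ge> v b (A b) / 2" unfolding B_def using P(6) hv[OF ab(2)] by auto
    have vo: "\<forall>d<n. d \<noteq> a \<longrightarrow> d \<noteq> b \<longrightarrow> v d (B d) \<ge> v d (A d)" unfolding B_def using hv by auto
    show ?thesis using alB va vb vo by blast
  next
    case False
    obtain c where c: "c < n" "c \<noteq> a" "h a \<inter> h c \<noteq> {}"
      using neighbor[of n h a b] hu ab aneb hf unfolding h_def by (force simp: less_imp_le)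
    have cb: "c \<noteq> b" using c False by auto
    define u where "u = min (Inf (A a)) (Inf (A c))"
    define w where "w = max (Sup (A a)) (Sup (A c))"
    have N: "h a \<union> h c = {u..w}" unfolding u_def w_def h_def
      using touch_union[of "Inf (A a)" "Sup (A a)" "Inf (A c)" "Sup (A c)"] c hf ab unfolding h_def
      by (simp add: less_imp_le)
    have uw: "0 \<le> u" "u \<le> w" "w \<le> 1" unfolding u_def w_def using hf[OF ab(1)] hf[OF c(1)] by (auto simp: min_def max_def)
    have b01: "0 \<le> Inf (A b)" "Inf (A b) \<le> Sup (A b)" "Sup (A b) \<le> 1" using hf[OF ab(2)] by auto
    obtain Pa Pb where P: "Pa \<union> Pb = h b" "int_disjoint Pa Pb" "cake_interval Pa" "cake_interval Pb"
       "v a Pa \<ge> v a (h b) / 2" "v b Pb \<ge> v b (h b) / 2"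
      using split_lemma[OF vd[OF ab(1)] vd[OF ab(2)] b01] unfolding h_def by blast
    define h' where "h' = h(c := h a \<union> h c)"
    define B where "B = h'(a:=Pa, b:=Pb)"
    have Ni: "is_interval (h a \<union> h c)" unfolding N by (simp add: is_interval_cc)
    have hN: "\<And>d. d < n \<Longrightarrow> d \<noteq> a \<Longrightarrow> d \<noteq> c \<Longrightarrow> int_disjoint (h d) (h a \<union> h c)"
      using int_disjoint_Un[OF hi hd hd Ni] ab c by metis
    have PM: "Pa \<subseteq> h b" "Pb \<subseteq> h b" using P(1) by auto
    have pw: "\<forall>d<n. \<forall>d'<n. d \<noteq> d' \<longrightarrow> int_disjoint (B d) (B d')"
      unfolding B_def
    proof (rule pairwise_upd2[OF _ aneb P(2)])
      show "\<forall>d<n. \<forall>d'<n. d \<noteq> d' \<longrightarrow> d \<noteq> a \<longrightarrow> d \<noteq> b \<longrightarrow> d' \<noteq> a \<longrightarrow> d' \<noteq> b \<longrightarrow> int_disjoint (h' d) (h' d')"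
      proof (intro allI impI)
        fix d d' assume d: "d < n" "d' < n" "d \<noteq> d'" "d \<noteq> a" "d \<noteq> b" "d' \<noteq> a" "d' \<noteq> b"
        show "int_disjoint (h' d) (h' d')"
        proof (cases "d = c")
          case True
          then show ?thesis unfolding h'_def using hN[of d'] d int_disjoint_commute by auto
        next
          case False
          show ?thesis
          proof (cases "d' = c")
            case True then show ?thesis unfolding h'_def using hN[of d] d False by auto
          next
            case False2: False then show ?thesis unfolding h'_def using hd d False by auto
          qed
        qed
      qed
      show "\<forall>d<n. d \<noteq> a \<longrightarrow> d \<noteq> b \<longrightarrow> int_disjoint (h' d) Pa \<and> int_disjoint (h' d) Pb"
      proof (intro allI impI)
        fix d assume d: "d < n" "d \<noteq> a" "d \<noteq> b"
        have "int_disjoint (h' d) (h b)"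
        proof (cases "d = c")
          case True
          then show ?thesis unfolding h'_def using hN[OF ab(2) aneb[symmetric] cb[symmetric]]
            int_disjoint_commute by auto
        next
          case False then show ?thesis unfolding h'_def using hd d ab by auto
        qed
        then show "int_disjoint (h' d) Pa \<and> int_disjoint (h' d) Pb" using PM int_disjoint_mono by blast
      qed
    qed
    have cB: "\<forall>d<n. cake_interval (B d)" unfolding B_def h'_def
      using hc P(3,4) cake_cc[OF uw(1,3)] N by auto
    have uB: "(\<Union>d<n. B d) = {0..1}"
    proof
      show "(\<Union>d<n. B d) \<subseteq> {0..1}" using cB unfolding cake_interval_def by blast
      show "{0..1} \<subseteq> (\<Union>d<n. B d)"
      proof
        fix x :: real assume "x \<in> {0..1}"
        then obtain d where d: "d < n" "x \<in> h d" using hu by blast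
        show "x \<in> (\<Union>d<n. B d)"
        proof (cases "d = b")
          case True
          then have "x \<in> Pa \<union> Pb" using d P(1) by auto
          then show ?thesis unfolding B_def using ab aneb by auto
        next
          case nb: False
          show ?thesis
          proof (cases "d = a \<or> d = c")
            case True
            then have "x \<in> B c" unfolding B_def h'_def using d c cb by auto
            then show ?thesis using c by auto
          next
            case False then show ?thesis unfolding B_def h'_def using d nb by auto
          qed
        qed
      qed
    qed
    have alB: "allocation n B" unfolding allocation_def using cB pw uB by auto
    have va: "v a (B a) > 2 * v a (A a)" unfolding B_def using P(5) aneb big
      hv ab v_hull[OF vd[OF ab(1)] cA[OF ab(2)] nd[OF ab(2)]] unfolding h_def by auto
    have vb: "v b (B b) \<ge> v b (A b) / 2" unfolding B_def using P(6) hv[OF ab(2)] by auto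
    have vc: "v c (h c) \<le> v c (h a \<union> h c)"
      using v_mono[OF vd[OF c(1)] hc[OF c(1)] cake_cc[OF uw(1,3)]] N by auto
    have vo: "\<forall>d<n. d \<noteq> a \<longrightarrow> d \<noteq> b \<longrightarrow> v d (B d) \<ge> v d (A d)"
      unfolding B_def h'_def using hv vc c by auto
    show ?thesis using alB va vb vo by blast
  qed
  then obtain B where B: "allocation n B" "v a (B a) > 2 * v a (A a)" "v b (B b) \<ge> v b (A b) / 2"
      "\<forall>d<n. d \<noteq> a \<longrightarrow> d \<noteq> b \<longrightarrow> v d (B d) \<ge> v d (A d)" by blast
  have "NSW n v A < NSW n v B" using improve[OF pos ab(1,2) aneb B(2,3,4)] .
  moreover have "NSW n v B \<le> NSW n v A" using opt B(1) unfolding nash_optimal_def by auto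
  ultimately show False by simp
qed


theorem theorem4:
  fixes n :: nat and v :: "nat \<Rightarrow> real set \<Rightarrow> real" and \<alpha> :: real
    and Aef Aopt :: "nat \<Rightarrow> real set"
  assumes "\<forall>a<n. valuation (v a)"
    and "\<alpha> \<ge> 1"
    and "allocation n Aef" and "approx_EF n v \<alpha> Aef"
    and "nash_optimal n v Aopt"
  shows "NSW n v Aef \<ge> (1 / (2 * \<alpha>)) * NSW n v Aopt \<and> approx_EF n v 4 Aopt"
proof
  have n0: "0 < n"
  proof (rule ccontr)
    assume "\<not> 0 < n"
    then have "(\<Union>a<n. Aef a) = {}" by auto
    then show False using assms(3) unfolding allocation_def by auto
  qed
  have aO: "allocation n Aopt" using assms(5) unfolding nash_optimal_def by auto
  have P1: "(\<Prod>a<n. v a (Aopt a)) \<le> (2*\<alpha>)^n * (\<Prod>a<n. v a (Aef a))"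
    using part1[OF assms(1,2,3,4) aO] .
  have "NSW n v Aopt \<le> root n ((2*\<alpha>)^n * (\<Prod>a<n. v a (Aef a)))"
    unfolding NSW_def using P1 n0 by simp
  also have "\<dots> = root n ((2*\<alpha>)^n) * root n (\<Prod>a<n. v a (Aef a))"
    by (rule real_root_mult)
  also have "root n ((2*\<alpha>)^n) = 2*\<alpha>" using n0 assms(2) by (intro real_root_power_cancel) auto
  also have "2 * \<alpha> * root n (\<Prod>a<n. v a (Aef a)) = 2 * \<alpha> * NSW n v Aef"
    unfolding NSW_def ..
  finally have "NSW n v Aopt \<le> 2 * \<alpha> * NSW n v Aef" .
  then show "NSW n v Aef \<ge> (1 / (2 * \<alpha>)) * NSW n v Aopt"
    using assms(2) by (simp add: field_simps)
  show "approx_EF n v 4 Aopt" using part2[OF assms(1,5)] .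
qed

end
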